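(* Let $I\subseteq\mathbb{R}$ be an interval containing $0$ and let $f:I\to\mathbb{R}$ be such that $f|_{I\cap[0,\infty)}$ is convex and $f(-x)=-f(x)$ whenever $x$ and $-x$ both belong to $I$. Then for every family of points $a_1,\dots,a_n\in I$ such that \[ \sum_{k=1}^n a_k+(n-2)\min\{a_1,\dots,a_n\}\ge0, \] we have \[ f\left(\frac1n\sum_{k=1}^n a_k\right)\le\frac1n\sum_{k=1}^n f(a_k). \] *)

theory Defs
  imports "HOL-Analysis.Analysis"
begin

end

theory Submission
  imports Defs
begin

lemma jensen_mean:
  fixes y :: "nat \<Rightarrow> real"
  assumes "finite A" "A \<noteq> {}" "convex_on C f" "\<And>i. i \<in> A \<Longrightarrow> y i \<in> C"
  shows "f (sum y A / card A) \<le> (\<Sum>i\<in>A. f (y i)) / card A"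
proof -
  have c: "card A > 0" using assms by (simp add: card_gt_0_iff)
  have "f (\<Sum>i\<in>A. (1 / card A) *\<^sub>R y i) \<le> (\<Sum>i\<in>A. (1/card A) * f (y i))"
    by (rule convex_on_sum[OF assms(1,2,3)]) (use c assms(4) in auto)
  thus ?thesis by (simp add: sum_divide_distrib[symmetric] sum_distrib_left[symmetric])
qed

lemma mean_in:
  fixes y :: "nat \<Rightarrow> real"
  assumes "finite A" "A \<noteq> {}" "convex C" "\<And>i. i \<in> A \<Longrightarrow> y i \<in> C"
  shows "sum y A / card A \<in> C"
proof -
  have c: "card A > 0" using assms by (simp add: card_gt_0_iff)
  have "(\<Sum>i\<in>A. (1 / card A) *\<^sub>R y i) \<in> C"
    by (rule convex_sum[OF assms(1,3)]) (use c assms(4) in auto)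
  thus ?thesis by (simp add: sum_divide_distrib[symmetric] sum_distrib_left[symmetric])
qed

lemma star:
  fixes f :: "real \<Rightarrow> real"
  assumes "convex_on C f" "0 \<in> C" "f 0 = 0" "x \<in> C" "x > 0" "0 \<le> t" "t \<le> x"
  shows "f t \<le> t / x * f x"
proof -
  have "f ((1 - t/x) *\<^sub>R 0 + (t/x) *\<^sub>R x) \<le> (1 - t/x) * f 0 + (t/x) * f x"
    by (rule convex_onD[OF assms(1)]) (use assms in auto)
  thus ?thesis using assms by simp
qed

theorem corollary3:
  fixes I :: "real set" and f :: "real \<Rightarrow> real" and a :: "nat \<Rightarrow> real" and n :: nat
  assumes "is_interval I" and "0 \<in> I"
    and "convex_on (I \<inter> {0..}) f"
    and "\<And>x. x \<in> I \<Longrightarrow> - x \<in> I \<Longrightarrow> f (- x) = - f x"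
    and "n \<ge> 1"
    and "\<And>k. k \<in> {1..n} \<Longrightarrow> a k \<in> I"
    and "(\<Sum>k=1..n. a k) + (real n - 2) * Min (a ` {1..n}) \<ge> 0"
  shows "f ((\<Sum>k=1..n. a k) / real n) \<le> (\<Sum>k=1..n. f (a k)) / real n"
proof -
  define K where "K = {1..n}"
  define C where "C = I \<inter> {0..}"
  define S where "S = (\<Sum>k\<in>K. a k)"
  define m where "m = Min (a ` K)"
  have fK: "finite K" and neK: "K \<noteq> {}" and cK: "card K = n" using assms(5) by (auto simp: K_def)
  have f0: "f 0 = 0" using assms(4)[of 0] assms(2) by simp
  have cvC: "convex C" unfolding C_def
    by (rule convex_Int[OF is_interval_convex[OF assms(1)]]) (simp add: convex_real_interval)
  have aI: "\<And>k. k \<in> K \<Longrightarrow> a k \<in> I" using assms(6) K_def by auto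
  have mle: "\<And>k. k \<in> K \<Longrightarrow> m \<le> a k" unfolding m_def using fK by auto
  obtain k0 where k0: "k0 \<in> K" "a k0 = m" unfolding m_def using fK neK
    by (metis (mono_tags, lifting) Min_in finite_imageI image_iff image_is_empty)
  have hyp: "S + (real n - 2) * m \<ge> 0" using assms(7) by (simp add: S_def m_def K_def)
  show ?thesis
  proof (cases "m \<ge> 0")
    case True
    have "f (sum a K / card K) \<le> (\<Sum>i\<in>K. f (a i)) / card K"
      by (rule jensen_mean[OF fK neK assms(3)]) (use aI mle True in \<open>auto intro: order.trans\<close>)
    thus ?thesis by (simp add: cK K_def)
  next
    case False
    hence mneg: "m < 0" by simp
    show ?thesis
    proof (cases "n = 1")
      case True thus ?thesis by simp
    next
      case False
      hence n2: "n \<ge> 2" using assms(5) by simp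
      define M where "M = - m"
      have Mpos: "M > 0" using mneg M_def by simp
      define P where "P = {k\<in>K. a k \<ge> 0}"
      define N where "N = {k\<in>K. a k < 0}"
      have fP: "finite P" and fN: "finite N" using fK by (auto simp: P_def N_def)
      have disj: "P \<inter> N = {}" and un: "P \<union> N = K" by (auto simp: P_def N_def)
      have k0N: "k0 \<in> N" using k0 mneg by (simp add: N_def)
      have cardPN: "card P + card N = n" using card_Un_disjoint[OF fP fN disj] un cK by simp
      have cN: "card N \<ge> 1" using k0N fN by (metis One_nat_def Suc_leI card_gt_0_iff empty_iff)
      have pn: "real (card P) \<le> real n - 1" using cardPN cN by linarith
      define SP where "SP = sum a P"
      define B where "B = - sum a N"
      have SSP: "S = SP - B" unfolding S_def SP_def B_def
        using sum.union_disjoint[OF fP fN disj] un by simp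
      have SM: "S \<ge> (real n - 2) * M" using hyp M_def by (simp add: algebra_simps)
      have "(real n - 2) * M \<ge> 0" using n2 Mpos by simp
      hence Sge: "S \<ge> 0" using SM by linarith
      have "B = (\<Sum>k\<in>N. - a k)" by (simp add: B_def sum_negf)
      also have "\<dots> \<ge> - a k0"
        using member_le_sum[of k0 N "\<lambda>k. - a k"] k0N fN by (auto simp: N_def)
      finally have BM: "B \<ge> M" using k0 M_def by simp
      have SPge: "SP \<ge> (real n - 1) * M" using SSP SM BM by (simp add: algebra_simps)
      have neP: "P \<noteq> {}"
      proof
        assume "P = {}"
        hence "SP = 0" by (simp add: SP_def)
        moreover have "(real n - 1) * M > 0" using n2 Mpos by simp
        ultimately show False using SPge by linarith
      qed
      have cP: "card P > 0" using fP neP by (simp add: card_gt_0_iff)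
      define y where "y = SP / card P"
      have yM: "y \<ge> M"
      proof -
        have "real (card P) * M \<le> (real n - 1) * M" using pn Mpos by (simp add: mult_right_mono)
        hence "real (card P) * M \<le> SP" using SPge by linarith
        thus ?thesis unfolding y_def using cP by (simp add: field_simps)
      qed
      have ypos: "y > 0" using yM Mpos by simp
      have yC: "y \<in> C" unfolding y_def SP_def
        by (rule mean_in[OF fP neP cvC]) (use aI in \<open>auto simp: P_def C_def\<close>)
      have jP: "f y \<le> (\<Sum>i\<in>P. f (a i)) / card P" unfolding y_def SP_def
        by (rule jensen_mean[OF fP neP assms(3)]) (use aI in \<open>auto simp: P_def\<close>)
      hence jP': "card P * f y \<le> (\<Sum>i\<in>P. f (a i))" using cP by (simp add: field_simps)
      have C0: "0 \<in> C" using assms(2) by (simp add: C_def)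
      have cvf: "convex_on C f" using assms(3) by (simp add: C_def)
      have Nb: "f (a k) \<ge> a k / y * f y" if kN: "k \<in> N" for k
      proof -
        have ak: "a k < 0" "a k \<in> I" "m \<le> a k" using kN aI mle by (auto simp: N_def)
        have "- a k \<in> I" using assms(1) ak yC assms(2) yM M_def
          unfolding is_interval_1 C_def
        proof -
          assume h: "\<forall>a\<in>I. \<forall>b\<in>I. \<forall>x. a \<le> x \<and> x \<le> b \<longrightarrow> x \<in> I"
          have "0 \<le> - a k" "- a k \<le> y" using ak yM M_def by auto
          moreover have "y \<in> I" using yC by (simp add: C_def)
          ultimately show "- a k \<in> I" using h assms(2) by blast
        qed
        hence eq: "f (a k) = - f (- a k)" using assms(4)[of "- a k"] ak by simp
        have "- a k \<in> C" using \<open>- a k \<in> I\<close> ak by (simp add: C_def)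
        have "f (- a k) \<le> (- a k) / y * f y"
          by (rule star[OF cvf C0 f0 yC ypos]) (use ak yM M_def in auto)
        thus ?thesis using eq by simp
      qed
      have jN: "(\<Sum>i\<in>N. f (a i)) \<ge> (\<Sum>i\<in>N. a i / y * f y)"
        by (rule sum_mono) (use Nb in auto)
      have sN: "(\<Sum>i\<in>N. a i / y * f y) = - B / y * f y"
        by (simp add: B_def sum_distrib_right[symmetric] sum_divide_distrib[symmetric])
      have tot: "(\<Sum>k\<in>K. f (a k)) = (\<Sum>i\<in>P. f (a i)) + (\<Sum>i\<in>N. f (a i))"
        using sum.union_disjoint[OF fP fN disj] un by simp
      have SPy: "card P * f y = SP / y * f y" using ypos cP f0 by (simp add: y_def)
      have lower: "(\<Sum>k\<in>K. f (a k)) \<ge> S / y * f y"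
      proof -
        have "(\<Sum>k\<in>K. f (a k)) \<ge> SP / y * f y - B / y * f y" using tot jP' jN sN SPy by linarith
        moreover have "SP / y * f y - B / y * f y = S / y * f y" using SSP by (simp add: diff_divide_distrib[symmetric] left_diff_distrib[symmetric])
        ultimately show ?thesis by linarith
      qed
      have Sny: "S / n \<le> y"
      proof -
        have "S \<le> SP" using SSP BM Mpos by simp
        have "SP / n \<le> SP / card P" using cP cardPN Sge \<open>S \<le> SP\<close>
          by (intro divide_left_mono) auto
        moreover have "S / n \<le> SP / n" using \<open>S \<le> SP\<close> by (simp add: divide_right_mono)
        ultimately show ?thesis unfolding y_def by linarith
      qed
      have "f (S / n) \<le> (S / n) / y * f y"
        by (rule star[OF cvf C0 f0 yC ypos]) (use Sge Sny in auto)
      also have "\<dots> = (S / y * f y) / n" by simp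
      also have "\<dots> \<le> (\<Sum>k\<in>K. f (a k)) / n" using lower n2 by (intro divide_right_mono) auto
      finally show ?thesis by (simp add: S_def K_def)
    qed
  qed
qed

end
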